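(* Let $f:\mathbb{R}\to\mathbb{R}$ be a bounded Abel continuous function. Then $f$ is linear, i.e. there exist $a,b\in\mathbb{R}$ with $f(t)=at+b$ for all $t\in\mathbb{R}$.
   Context: A sequence $(p_n)$ is Abel convergent to $\ell$ if $\sum_{k=0}^{\infty}p_k x^k$ converges for every $0\le x<1$ and $\lim_{x\to 1^-}(1-x)\sum_{k=0}^{\infty}p_k x^k=\ell$. $f$ is Abel continuous if $(f(p_n))$ is Abel convergent to $f(\ell)$ whenever $(p_n)$ is Abel convergent to $\ell$. "Linear" here is used in the sense of a function of the form $t\mapsto at+b$. *)

theory Defs
  imports "HOL-Analysis.Analysis"
begin

definition abel_convergent :: "(nat \<Rightarrow> real) \<Rightarrow> real \<Rightarrow> bool" where
  "abel_convergent p l \<longleftrightarrow>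
     (\<forall>x::real. 0 \<le> x \<and> x < 1 \<longrightarrow> summable (\<lambda>k. p k * x ^ k)) \<and>
     ((\<lambda>x. (1 - x) * (\<Sum>k. p k * x ^ k)) \<longlongrightarrow> l) (at_left 1)"

definition abel_continuous :: "(real \<Rightarrow> real) \<Rightarrow> bool" where
  "abel_continuous f \<longleftrightarrow>
     (\<forall>p l. abel_convergent p l \<longrightarrow> abel_convergent (\<lambda>n. f (p n)) (f l))"

end

theory Submission
  imports Defs
begin

lemma alt_sums:
  fixes A B x :: real
  assumes "0 \<le> x" "x < 1"
  shows "(\<lambda>k. (A + B * (-1)^k) * x^k) sums (A / (1 - x) + B / (1 + x))"
proof -
  have "(\<lambda>k. x^k) sums (1/(1-x))" using assms by (intro geometric_sums) simp
  hence a: "(\<lambda>k. A * x^k) sums (A * (1/(1-x)))" by (rule sums_mult)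
  have "(\<lambda>k. (-x)^k) sums (1/(1-(-x)))" using assms by (intro geometric_sums) simp
  hence b: "(\<lambda>k. B * (-x)^k) sums (B * (1/(1-(-x))))" by (rule sums_mult)
  have "(\<lambda>k. A * x^k + B * (-x)^k) sums (A * (1/(1-x)) + B * (1/(1-(-x))))"
    using sums_add[OF a b] .
  moreover have "\<And>k. A * x^k + B * (-x)^k = (A + B * (-1)^k) * x^k"
    by (subst power_minus) (simp only: distrib_right mult.assoc)
  ultimately show ?thesis by simp
qed

lemma alt_abel:
  fixes A B :: real
  shows "abel_convergent (\<lambda>k. A + B * (-1)^k) A"
  unfolding abel_convergent_def
proof (intro conjI allI impI)
  fix x :: real assume "0 \<le> x \<and> x < 1"
  thus "summable (\<lambda>k. (A + B * (-1)^k) * x^k)" using alt_sums sums_summable by blast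
next
  have ev: "\<forall>\<^sub>F x in at_left (1::real). A + B * ((1 - x) / (1 + x)) =
       (1 - x) * (\<Sum>k. (A + B * (-1)^k) * x^k)"
  proof -
    have "\<forall>\<^sub>F x in at_left (1::real). x \<in> {0<..<1}"
      by (intro eventually_at_left_real) simp
    thus ?thesis
    proof (rule eventually_mono)
      fix x :: real assume x: "x \<in> {0<..<1}"
      have "(\<lambda>k. (A + B * (-1)^k) * x^k) sums (A / (1 - x) + B / (1 + x))"
        using alt_sums[of x A B] x by auto
      hence "(\<Sum>k. (A + B * (-1)^k) * x^k) = A / (1 - x) + B / (1 + x)"
        by (rule sums_unique[symmetric])
      moreover have "A + B * ((1 - x) / (1 + x)) = (1 - x) * (A / (1 - x) + B / (1 + x))"
      proof -
        have "1 - x \<noteq> 0" "1 + x \<noteq> 0" using x by auto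
        hence "(1 - x) * (A / (1 - x)) = A" "(1 - x) * (B / (1 + x)) = B * ((1 - x) / (1 + x))"
          by simp_all
        thus ?thesis by (simp only: distrib_left)
      qed
      ultimately show "A + B * ((1 - x) / (1 + x)) = (1 - x) * (\<Sum>k. (A + B * (-1)^k) * x^k)"
        by simp
    qed
  qed
  have "((\<lambda>x. A + B * ((1 - x) / (1 + x))) \<longlongrightarrow> A + B * ((1 - 1) / (1 + 1))) (at_left (1::real))"
    by (intro tendsto_intros) auto
  hence "((\<lambda>x. A + B * ((1 - x) / (1 + x))) \<longlongrightarrow> A) (at_left (1::real))" by simp
  thus "((\<lambda>x. (1 - x) * (\<Sum>k. (A + B * (-1)^k) * x^k)) \<longlongrightarrow> A) (at_left 1)"
    using ev by (rule Lim_transform_eventually)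
qed

lemma abel_unique:
  assumes "abel_convergent p l" "abel_convergent p m"
  shows "l = m"
  using assms unfolding abel_convergent_def
  using tendsto_unique trivial_limit_at_left_real by blast

lemma abel_midpoint:
  assumes "abel_continuous f"
  shows "f ((u + v) / 2) = (f u + f v) / 2"
proof -
  define p where "p = (\<lambda>k::nat. (u+v)/2 + (u-v)/2 * (-1::real)^k)"
  have "abel_convergent p ((u+v)/2)" unfolding p_def by (rule alt_abel)
  hence 1: "abel_convergent (\<lambda>n. f (p n)) (f ((u+v)/2))"
    using assms unfolding abel_continuous_def by blast
  have eq: "(\<lambda>n. f (p n)) = (\<lambda>k. (f u + f v)/2 + (f u - f v)/2 * (-1::real)^k)"
  proof
    fix k :: nat
    show "f (p k) = (f u + f v)/2 + (f u - f v)/2 * (-1::real)^k"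
      by (cases "even k") (simp_all add: p_def field_simps)
  qed
  have 2: "abel_convergent (\<lambda>n. f (p n)) ((f u + f v)/2)" unfolding eq by (rule alt_abel)
  show ?thesis using abel_unique[OF 1 2] .
qed

theorem corollary7:
  fixes f :: "real \<Rightarrow> real"
  assumes "bounded (range f)"
    and "abel_continuous f"
  shows "\<exists>a b. \<forall>t. f t = a * t + b"
proof -
  obtain M where M: "\<And>y. \<bar>f y\<bar> \<le> M"
    using assms(1) unfolding bounded_iff by auto
  have dbl: "f (2 * s) - f 0 = 2 * (f s - f 0)" for s
  proof -
    have "f ((0 + 2 * s)/2) = (f 0 + f (2 * s))/2" by (rule abel_midpoint[OF assms(2)])
    thus ?thesis by simp
  qed
  have pw: "f (2^n * t) - f 0 = 2^n * (f t - f 0)" for n t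
  proof (induction n)
    case 0 then show ?case by simp
  next
    case (Suc n)
    have "f (2^Suc n * t) - f 0 = 2 * (f (2^n * t) - f 0)"
      using dbl[of "2^n * t"] by (simp add: mult.assoc)
    then show ?case using Suc by simp
  qed
  have const: "f t = f 0" for t
  proof (rule ccontr)
    assume ne: "f t \<noteq> f 0"
    define d where "d = \<bar>f t - f 0\<bar>"
    have d: "d > 0" using ne d_def by simp
    obtain n :: nat where n: "2 * M / d < real n" using reals_Archimedean2 by blast
    have "real n < 2^n" by (rule of_nat_less_two_power)
    hence "2 * M / d < 2^n" using n by linarith
    hence "2 * M < 2^n * d" using d by (simp add: field_simps)
    also have "2^n * d = \<bar>f (2^n * t) - f 0\<bar>" using pw[of n t] by (simp add: d_def abs_mult)
    also have "\<dots> \<le> 2 * M" using M[of "2^n*t"] M[of 0] by linarith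
    finally show False by simp
  qed
  have "\<forall>t. f t = 0 * t + f 0"
  proof
    fix t show "f t = 0 * t + f 0" using const[of t] by simp
  qed
  thus ?thesis by blast
qed

end
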